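(* For every $c,c'\in\mathbb{C}$ we have $|r_{\mathrm{bif}}(c)-r_{\mathrm{bif}}(c')|\le|c-c'|$; that is, $r_{\mathrm{bif}}:\mathbb{C}\to[0,\infty)$ is $1$-Lipschitz.
   Context: $f_c(z)=z^2+c$, extended to $\widehat{\mathbb{C}}$ by $f_c(\infty)=\infty$. For $c\in\mathbb{C}$, $r\ge0$, $G_{c,r}$ is the semigroup under composition generated by $\{f_{c'}:|c'-c|\le r\}$. A minimal set of a polynomial semigroup $G$ is a minimal element, with respect to inclusion, of the family of non-empty compact $L\subset\widehat{\mathbb{C}}$ with $g(L)\subset L$ for all $g\in G$; it is planar if $\infty\notin L$. The bifurcation radius $r_{\mathrm{bif}}(c)$ is the supremum of those $r\ge0$ for which $G_{c,r}$ has a planar minimal set (equivalently the infimum of those $r\ge0$ for which $G_{c,r}$ has no planar minimal set); by prior work this value is attained and $G_{c,r}$ has a planar minimal set iff $r\le r_{\mathrm{bif}}(c)$. *)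

theory Defs
  imports "HOL-Analysis.Analysis"
begin

text \<open>The Riemann sphere is modelled as complex option: Some z is the point z,
  None is the point at infinity.\<close>

type_synonym csphere = "complex option"

text \<open>Compactness in the one-point compactification: a set is compact iff either
  it avoids infinity and its finite part is compact in the plane, or it contains
  infinity and its finite part is closed in the plane.\<close>
definition sphere_compact :: "csphere set \<Rightarrow> bool" where
  "sphere_compact L \<longleftrightarrow>
     (None \<notin> L \<and> compact (Some -` L)) \<or> (None \<in> L \<and> closed (Some -` L))"

definition fhat :: "complex \<Rightarrow> csphere \<Rightarrow> csphere" where
  "fhat c = map_option (\<lambda>z. z ^ 2 + c)"

inductive_set gen_semigroup :: "('a \<Rightarrow> 'a) set \<Rightarrow> ('a \<Rightarrow> 'a) set"
  for S :: "('a \<Rightarrow> 'a) set" where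
  gen: "g \<in> S \<Longrightarrow> g \<in> gen_semigroup S"
| comp: "f \<in> gen_semigroup S \<Longrightarrow> g \<in> gen_semigroup S \<Longrightarrow> f \<circ> g \<in> gen_semigroup S"

definition Gcr :: "complex \<Rightarrow> real \<Rightarrow> (csphere \<Rightarrow> csphere) set" where
  "Gcr c r = gen_semigroup {fhat c' | c'. cmod (c' - c) \<le> r}"

definition invariant_compact :: "(csphere \<Rightarrow> csphere) set \<Rightarrow> csphere set \<Rightarrow> bool" where
  "invariant_compact G L \<longleftrightarrow> L \<noteq> {} \<and> sphere_compact L \<and> (\<forall>g\<in>G. g ` L \<subseteq> L)"

definition minimal_set :: "(csphere \<Rightarrow> csphere) set \<Rightarrow> csphere set \<Rightarrow> bool" where
  "minimal_set G L \<longleftrightarrow> invariant_compact G L \<and>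
     (\<forall>L'. invariant_compact G L' \<and> L' \<subseteq> L \<longrightarrow> L' = L)"

definition planar_minimal_set :: "(csphere \<Rightarrow> csphere) set \<Rightarrow> csphere set \<Rightarrow> bool" where
  "planar_minimal_set G L \<longleftrightarrow> minimal_set G L \<and> None \<notin> L"

definition r_bif :: "complex \<Rightarrow> real" where
  "r_bif c = Sup {r. r \<ge> 0 \<and> (\<exists>L. planar_minimal_set (Gcr c r) L)}"

end

theory Submission
  imports Defs
begin

definition inv_set :: "complex \<Rightarrow> real \<Rightarrow> complex set \<Rightarrow> bool" where
  "inv_set c r K \<longleftrightarrow> K \<noteq> {} \<and> compact K \<and> (\<forall>a. cmod (a - c) \<le> r \<longrightarrow> (\<forall>z\<in>K. z^2 + a \<in> K))"

lemma semigroup_inv: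
  assumes "g \<in> gen_semigroup S" "\<And>s. s \<in> S \<Longrightarrow> s ` L \<subseteq> L"
  shows "g ` L \<subseteq> L"
  using assms(1)
proof (induction rule: gen_semigroup.induct)
  case (gen g) then show ?case using assms(2) by blast
next
  case (comp f g) then show ?case by (auto simp: image_comp[symmetric])
qed

lemma Some_pre: assumes nN: "None \<notin> L" shows "L = Some ` (Some -` L)"
proof
  show "L \<subseteq> Some ` (Some -` L)"
  proof
    fix x assume x: "x \<in> L"
    then obtain y where "x = Some y" using nN by (cases x) auto
    then show "x \<in> Some ` (Some -` L)" using x by auto
  qed
qed auto

lemma Gcr_gen: "cmod (a - c) \<le> r \<Longrightarrow> fhat a \<in> Gcr c r"
  unfolding Gcr_def by (rule gen_semigroup.gen) blast

lemma inv_imp_pms: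
  assumes K: "inv_set c r K"
  shows "\<exists>L. planar_minimal_set (Gcr c r) L"
proof -
  let ?A = "uminus ` {K'. inv_set c r K'}"
  have "\<exists>M\<in>?A. \<forall>X\<in>?A. M \<subseteq> X \<longrightarrow> X = M"
  proof (rule subset_Zorn_nonempty)
    show "?A \<noteq> {}" using K by blast
  next
    fix C assume Cne: "C \<noteq> {}" and ch: "subset.chain ?A C"
    define F where "F = uminus ` C"
    have Fsub: "\<And>S. S \<in> F \<Longrightarrow> inv_set c r S"
      using ch unfolding F_def subset.chain_def by auto
    have Fne: "F \<noteq> {}" using Cne F_def by auto
    have Fch: "S \<subseteq> T \<or> T \<subseteq> S" if ST: "S \<in> F \<and> T \<in> F" for S T
    proof -
      obtain X Y where "X \<in> C" "Y \<in> C" "S = - X" "T = - Y" using ST unfolding F_def by blast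
      then have "X \<subseteq> Y \<or> Y \<subseteq> X" using ch unfolding subset.chain_def by blast
      then show ?thesis using \<open>S = - X\<close> \<open>T = - Y\<close> by auto
    qed
    have "\<Inter>F \<noteq> {}"
    proof (rule compact_chain)
      show "compact S" if "S \<in> F" for S using Fsub[OF that] by (simp add: inv_set_def)
      show "{} \<notin> F" using Fsub by (auto simp: inv_set_def)
      show "S \<subseteq> T \<or> T \<subseteq> S" if "S \<in> F \<and> T \<in> F" for S T by (rule Fch[OF that])
    qed
    moreover have "compact (\<Inter>F)"
      by (rule compact_Inter) (use Fsub Fne in \<open>auto simp: inv_set_def\<close>)
    moreover have "\<forall>a. cmod (a - c) \<le> r \<longrightarrow> (\<forall>z\<in>\<Inter>F. z^2 + a \<in> \<Inter>F)"
      using Fsub by (auto simp: inv_set_def)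
    ultimately have "inv_set c r (\<Inter>F)" by (simp add: inv_set_def)
    moreover have "\<Union>C = - \<Inter>F" unfolding F_def by auto
    ultimately show "\<Union>C \<in> ?A" by auto
  qed
  then obtain K0 where K0: "inv_set c r K0"
    and min: "\<And>K'. inv_set c r K' \<Longrightarrow> K' \<subseteq> K0 \<Longrightarrow> K' = K0"
  proof -
    assume H: "\<And>K0. inv_set c r K0 \<Longrightarrow> (\<And>K'. inv_set c r K' \<Longrightarrow> K' \<subseteq> K0 \<Longrightarrow> K' = K0) \<Longrightarrow> thesis"
    from \<open>\<exists>M\<in>?A. \<forall>X\<in>?A. M \<subseteq> X \<longrightarrow> X = M\<close> obtain M0 where "M0 \<in> ?A" and M0: "\<forall>X\<in>?A. M0 \<subseteq> X \<longrightarrow> X = M0" by blast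
    then obtain K0 where K0: "inv_set c r K0" "M0 = - K0" by blast
    show thesis
    proof (rule H[OF K0(1)])
      fix K' assume "inv_set c r K'" "K' \<subseteq> K0"
      then have "- K' \<in> ?A" "M0 \<subseteq> - K'" using K0 by auto
      then have "- K' = - K0" using M0 K0 by auto
      then show "K' = K0" by simp
    qed
  qed
  define L where "L = Some ` K0"
  have pre: "Some -` L = K0" unfolding L_def by auto
  have ic: "invariant_compact (Gcr c r) L"
    unfolding invariant_compact_def
  proof (intro conjI ballI)
    show "L \<noteq> {}" using K0 by (auto simp: L_def inv_set_def)
    show "sphere_compact L" using K0 pre by (auto simp: sphere_compact_def L_def inv_set_def)
    fix g assume "g \<in> Gcr c r"
    then show "g ` L \<subseteq> L" unfolding Gcr_def
    proof (rule semigroup_inv)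
      fix s assume "s \<in> {fhat c' |c'. cmod (c' - c) \<le> r}"
      then obtain a where "s = fhat a" "cmod (a - c) \<le> r" by blast
      then show "s ` L \<subseteq> L" using K0
        by (auto simp: L_def fhat_def inv_set_def)
    qed
  qed
  have "minimal_set (Gcr c r) L"
    unfolding minimal_set_def
  proof (intro conjI ic allI impI)
    fix L' assume H: "invariant_compact (Gcr c r) L' \<and> L' \<subseteq> L"
    have nN: "None \<notin> L'" using H by (auto simp: L_def)
    define K' where "K' = Some -` L'"
    have LK: "L' = Some ` K'" unfolding K'_def
      by (rule Some_pre[OF nN])
    have "inv_set c r K'"
      unfolding inv_set_def
    proof (intro conjI allI impI ballI)
      show "K' \<noteq> {}" using H LK by (auto simp: invariant_compact_def)
      show "compact K'" using H nN by (auto simp: invariant_compact_def sphere_compact_def K'_def)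
      fix a z assume a: "cmod (a - c) \<le> r" and z: "z \<in> K'"
      have "fhat a ` L' \<subseteq> L'" using H Gcr_gen[OF a] by (auto simp: invariant_compact_def)
      then show "z^2 + a \<in> K'" using z by (auto simp: K'_def fhat_def)
    qed
    moreover have "K' \<subseteq> K0" using H pre K'_def by auto
    ultimately have "K' = K0" by (rule min)
    then show "L' = L" using LK L_def by simp
  qed
  then show ?thesis unfolding planar_minimal_set_def L_def by auto
qed

lemma pms_imp_inv:
  assumes "planar_minimal_set (Gcr c r) L"
  shows "inv_set c r (Some -` L)"
proof -
  have ic: "invariant_compact (Gcr c r) L" and nN: "None \<notin> L"
    using assms by (auto simp: planar_minimal_set_def minimal_set_def)
  have "L = Some ` (Some -` L)"
    by (rule Some_pre[OF nN])
  show ?thesis unfolding inv_set_def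
  proof (intro conjI allI impI ballI)
    have "L \<noteq> {}" using ic by (simp add: invariant_compact_def)
    then show "Some -` L \<noteq> {}" using \<open>L = Some ` (Some -` L)\<close> by (metis image_empty)
    show "compact (Some -` L)" using ic nN by (auto simp: invariant_compact_def sphere_compact_def)
    fix a z assume a: "cmod (a - c) \<le> r" and z: "z \<in> Some -` L"
    have "fhat a ` L \<subseteq> L" using ic Gcr_gen[OF a] by (auto simp: invariant_compact_def)
    then show "z^2 + a \<in> Some -` L" using z by (auto simp: fhat_def)
  qed
qed

lemma inv_shift:
  assumes "inv_set c r K" "cmod (c - c') \<le> r"
  shows "inv_set c' (r - cmod (c - c')) K"
  using assms unfolding inv_set_def
proof (intro conjI allI impI ballI)
  fix a z assume a: "cmod (a - c') \<le> r - cmod (c - c')" and z: "z \<in> K"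
  have "cmod (a - c) \<le> cmod (a - c') + cmod (c' - c)"
    using norm_triangle_ineq[of "a - c'" "c' - c"] by simp
  also have "cmod (c' - c) = cmod (c - c')" by (simp add: norm_minus_commute)
  finally have "cmod (a - c) \<le> r" using a by simp
  then show "z^2 + a \<in> K" using assms z unfolding inv_set_def by blast
qed (use assms in \<open>auto simp: inv_set_def\<close>)

lemma inv_zero: "\<exists>K. inv_set c 0 K"
proof -
  define s where "s = csqrt (1 - 4*c)"
  define z where "z = (1 + s) / 2"
  have "s^2 = 1 - 4*c" unfolding s_def by simp
  have "z^2 + c - z = (s^2 - (1 - 4*c)) / 4" unfolding z_def by (simp add: power2_eq_square field_simps)
  then have "z^2 + c = z" using \<open>s^2 = 1 - 4*c\<close> by simp
  then have "inv_set c 0 {z}" by (simp add: inv_set_def)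
  then show ?thesis by blast
qed

lemma inv_bound:
  assumes "inv_set c r K"
  shows "r \<le> cmod c + 1"
proof -
  have Kc: "compact K" "K \<noteq> {}" using assms by (auto simp: inv_set_def)
  obtain z where z: "z \<in> K" and zmax: "\<And>y. y \<in> K \<Longrightarrow> cmod y \<le> cmod z"
  proof -
    have "compact (cmod ` K)" by (rule compact_continuous_image) (auto intro: continuous_intros Kc)
    moreover have "cmod ` K \<noteq> {}" using Kc by simp
    ultimately obtain m where "m \<in> cmod ` K" "\<forall>t\<in>cmod ` K. t \<le> m"
      using compact_attains_sup by blast
    then show ?thesis using that by auto
  qed
  define w where "w = z^2 + c"
  define u where "u = (if w = 0 then 1 else sgn w)"
  have u1: "cmod u = 1" by (simp add: u_def norm_sgn)
  have wu: "w = of_real (cmod w) * u" by (simp add: u_def complex_sgn_def scaleR_conv_of_real)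
  show ?thesis
  proof (cases "r \<ge> 0")
    case False then show ?thesis by (smt (verit) norm_ge_zero)
  next
    case True
    define a where "a = c + of_real r * u"
    have "cmod (a - c) \<le> r" using u1 True by (simp add: a_def norm_mult)
    then have "z^2 + a \<in> K" using assms z by (auto simp: inv_set_def)
    then have le: "cmod (z^2 + a) \<le> cmod z" using zmax by blast
    have "of_real (cmod w + r) * u = of_real (cmod w) * u + of_real r * u" by (simp add: distrib_right)
    also have "\<dots> = w + of_real r * u" using wu by simp
    finally have "z^2 + a = of_real (cmod w + r) * u" by (simp add: a_def w_def)
    moreover have "cmod (of_real (cmod w + r) :: complex) = cmod w + r" using True by (simp only: norm_of_real) (simp add: True)
    ultimately have eq: "cmod (z^2 + a) = cmod w + r" using u1 by (simp only: norm_mult) simp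
    have "cmod w \<ge> cmod z ^ 2 - cmod c"
    proof -
      have "cmod (z^2) - cmod (-c) \<le> cmod (z^2 - -c)" by (rule norm_triangle_ineq2)
      then show ?thesis by (simp add: w_def norm_power)
    qed
    then have "cmod z ^ 2 - cmod c + r \<le> cmod z" using eq le by linarith
    moreover have "cmod z \<le> cmod z ^ 2 + 1"
    proof -
      have "0 \<le> (cmod z - 1)^2" by simp
      then have "0 \<le> cmod z ^ 2 - 2 * cmod z + 1" by (simp add: power2_eq_square algebra_simps)
      moreover have "0 \<le> cmod z ^ 2" by simp
      ultimately show ?thesis by linarith
    qed
    ultimately show ?thesis by linarith
  qed
qed

lemma Sset_char: "{r. r \<ge> 0 \<and> (\<exists>L. planar_minimal_set (Gcr c r) L)} = {r. r \<ge> 0 \<and> (\<exists>K. inv_set c r K)}"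
  using inv_imp_pms pms_imp_inv by blast

lemma one_side: "r_bif c \<le> r_bif c' + cmod (c - c')"
proof -
  define S where "S = (\<lambda>c. {r. r \<ge> 0 \<and> (\<exists>K. inv_set c r K)})"
  have rb: "\<And>c. r_bif c = Sup (S c)" unfolding r_bif_def S_def Sset_char ..
  have ne: "\<And>c. 0 \<in> S c" using inv_zero unfolding S_def by auto
  have bdd: "\<And>c. bdd_above (S c)" unfolding S_def bdd_above_def using inv_bound by blast
  have "Sup (S c) \<le> Sup (S c') + cmod (c - c')"
  proof (rule cSup_least)
    show "S c \<noteq> {}" using ne by blast
    fix r assume r: "r \<in> S c"
    show "r \<le> Sup (S c') + cmod (c - c')"
    proof (cases "cmod (c - c') \<le> r")
      case True
      obtain K where "inv_set c r K" using r unfolding S_def by auto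
      then have "inv_set c' (r - cmod (c - c')) K" using True by (rule inv_shift)
      then have "r - cmod (c - c') \<in> S c'" using True unfolding S_def by auto
      then have "r - cmod (c - c') \<le> Sup (S c')" using bdd by (rule cSup_upper)
      then show ?thesis by simp
    next
      case False
      have "0 \<le> Sup (S c')" using ne bdd by (rule cSup_upper)
      then show ?thesis using False by simp
    qed
  qed
  then show ?thesis by (simp add: rb)
qed

theorem theorem4p10:
  fixes c c' :: complex
  shows "\<bar>r_bif c - r_bif c'\<bar> \<le> cmod (c - c')"
  using one_side[of c c'] one_side[of c' c] by (simp add: norm_minus_commute abs_le_iff)

end
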